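(* Let $(X,\widetilde{\tau},\mathfrak{a}_E,E)$ be a soft aura topological space. Then: (i) an arbitrary soft union of soft $\mathfrak{a}$-semi-open sets is soft $\mathfrak{a}$-semi-open; (ii) an arbitrary soft union of soft $\mathfrak{a}$-pre-open sets is soft $\mathfrak{a}$-pre-open; (iii) an arbitrary soft union of soft $\mathfrak{a}$-$\beta$-open sets is soft $\mathfrak{a}$-$\beta$-open.
   Context: Let $X$ be a nonempty set and $E$ a nonempty parameter set. A soft set over $X$ is a map $F:E\to\mathcal{P}(X)$, written $(F,E)$; $\mathrm{SS}(X,E)$ denotes all soft sets; $\sqsubseteq$ and (arbitrary) soft union $\bigsqcup$ are parameterwise inclusion and union. A soft topology $\widetilde{\tau}$ is a subfamily of $\mathrm{SS}(X,E)$ containing the soft sets with all values $\emptyset$ and all values $X$, closed under arbitrary soft unions and finite soft intersections. A soft scope function is a map $\mathfrak{a}_E:X\to\widetilde{\tau}$ with $x\in\mathfrak{a}_E(x)(e)$ for all $x\in X$, $e\in E$; $(X,\widetilde{\tau},\mathfrak{a}_E,E)$ is a soft aura topological space. $\mathrm{cl}_{\mathfrak{a}}(G,E)(e)=\{x:\mathfrak{a}_E(x)(e)\cap G(e)\neq\emptyset\}$, $\mathrm{int}_{\mathfrak{a}}(G,E)(e)=\{x:\mathfrak{a}_E(x)(e)\subseteq G(e)\}$. $(G,E)$ is soft $\mathfrak{a}$-semi-open if $(G,E)\sqsubseteq\mathrm{cl}_{\mathfrak{a}}(\mathrm{int}_{\mathfrak{a}}(G,E))$; soft $\mathfrak{a}$-pre-open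 if $(G,E)\sqsubseteq\mathrm{int}_{\mathfrak{a}}(\mathrm{cl}_{\mathfrak{a}}(G,E))$; soft $\mathfrak{a}$-$\beta$-open if $(G,E)\sqsubseteq\mathrm{cl}_{\mathfrak{a}}(\mathrm{int}_{\mathfrak{a}}(\mathrm{cl}_{\mathfrak{a}}(G,E)))$. *)

theory Defs
  imports Main
begin

text \<open>Soft sets over the universe X = UNIV :: 'x set with parameter set E = UNIV :: 'e set
  are maps 'e \<Rightarrow> 'x set.  (HOL types are nonempty, matching the standing assumptions.)\<close>

type_synonym ('e, 'x) soft_set = "'e \<Rightarrow> 'x set"

definition soft_subset :: "('e, 'x) soft_set \<Rightarrow> ('e, 'x) soft_set \<Rightarrow> bool" where
  "soft_subset F G \<longleftrightarrow> (\<forall>e. F e \<subseteq> G e)"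

definition soft_Union :: "('e, 'x) soft_set set \<Rightarrow> ('e, 'x) soft_set" where
  "soft_Union S = (\<lambda>e. \<Union>F\<in>S. F e)"

definition soft_inter :: "('e, 'x) soft_set \<Rightarrow> ('e, 'x) soft_set \<Rightarrow> ('e, 'x) soft_set" where
  "soft_inter F G = (\<lambda>e. F e \<inter> G e)"

definition soft_null :: "('e, 'x) soft_set" where
  "soft_null = (\<lambda>e. {})"

definition soft_absolute :: "('e, 'x) soft_set" where
  "soft_absolute = (\<lambda>e. UNIV)"

definition soft_topology :: "('e, 'x) soft_set set \<Rightarrow> bool" where
  "soft_topology T \<longleftrightarrow>
     soft_null \<in> T \<and> soft_absolute \<in> T \<and>
     (\<forall>S. S \<subseteq> T \<longrightarrow> soft_Union S \<in> T) \<and>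
     (\<forall>F\<in>T. \<forall>G\<in>T. soft_inter F G \<in> T)"

definition soft_scope :: "('e, 'x) soft_set set \<Rightarrow> ('x \<Rightarrow> ('e, 'x) soft_set) \<Rightarrow> bool" where
  "soft_scope T a \<longleftrightarrow> (\<forall>x. a x \<in> T \<and> (\<forall>e. x \<in> a x e))"

definition soft_aura_space :: "('e, 'x) soft_set set \<Rightarrow> ('x \<Rightarrow> ('e, 'x) soft_set) \<Rightarrow> bool" where
  "soft_aura_space T a \<longleftrightarrow> soft_topology T \<and> soft_scope T a"

definition cl_a :: "('x \<Rightarrow> ('e, 'x) soft_set) \<Rightarrow> ('e, 'x) soft_set \<Rightarrow> ('e, 'x) soft_set" where
  "cl_a a G = (\<lambda>e. {x. a x e \<inter> G e \<noteq> {}})"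

definition int_a :: "('x \<Rightarrow> ('e, 'x) soft_set) \<Rightarrow> ('e, 'x) soft_set \<Rightarrow> ('e, 'x) soft_set" where
  "int_a a G = (\<lambda>e. {x. a x e \<subseteq> G e})"

definition soft_a_semi_open where
  "soft_a_semi_open a G \<longleftrightarrow> soft_subset G (cl_a a (int_a a G))"

definition soft_a_pre_open where
  "soft_a_pre_open a G \<longleftrightarrow> soft_subset G (int_a a (cl_a a G))"

definition soft_a_beta_open where
  "soft_a_beta_open a G \<longleftrightarrow> soft_subset G (cl_a a (int_a a (cl_a a G)))"

end

theory Submission
  imports Defs
begin

lemma cl_mono: "(\<And>e. F e \<subseteq> G e) \<Longrightarrow> cl_a a F e \<subseteq> cl_a a G e"
  unfolding cl_a_def by blast

lemma int_mono: "(\<And>e. F e \<subseteq> G e) \<Longrightarrow> int_a a F e \<subseteq> int_a a G e"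
  unfolding int_a_def by blast

lemma sub_U: "G \<in> S \<Longrightarrow> G e \<subseteq> soft_Union S e"
  unfolding soft_Union_def by blast

theorem theorem4p4:
  fixes T :: "('e, 'x) soft_set set" and a :: "'x \<Rightarrow> ('e, 'x) soft_set"
  assumes "soft_aura_space T a"
  shows "(\<forall>S. (\<forall>G\<in>S. soft_a_semi_open a G) \<longrightarrow> soft_a_semi_open a (soft_Union S))
       \<and> (\<forall>S. (\<forall>G\<in>S. soft_a_pre_open a G) \<longrightarrow> soft_a_pre_open a (soft_Union S))
       \<and> (\<forall>S. (\<forall>G\<in>S. soft_a_beta_open a G) \<longrightarrow> soft_a_beta_open a (soft_Union S))"
proof (intro conjI allI impI)
  fix S :: "('e, 'x) soft_set set"
  {
    assume h: "\<forall>G\<in>S. soft_a_semi_open a G"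
    show "soft_a_semi_open a (soft_Union S)"
      unfolding soft_a_semi_open_def soft_subset_def
    proof (intro allI subsetI)
      fix e x assume "x \<in> soft_Union S e"
      then obtain G where G: "G \<in> S" "x \<in> G e" unfolding soft_Union_def by blast
      then have "x \<in> cl_a a (int_a a G) e" using h unfolding soft_a_semi_open_def soft_subset_def by blast
      moreover have "cl_a a (int_a a G) e \<subseteq> cl_a a (int_a a (soft_Union S)) e"
        by (intro cl_mono int_mono sub_U G(1))
      ultimately show "x \<in> cl_a a (int_a a (soft_Union S)) e" by blast
    qed
  }
  {
    assume h: "\<forall>G\<in>S. soft_a_pre_open a G"
    show "soft_a_pre_open a (soft_Union S)"
      unfolding soft_a_pre_open_def soft_subset_def
    proof (intro allI subsetI)
      fix e x assume "x \<in> soft_Union S e"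
      then obtain G where G: "G \<in> S" "x \<in> G e" unfolding soft_Union_def by blast
      then have "x \<in> int_a a (cl_a a G) e" using h unfolding soft_a_pre_open_def soft_subset_def by blast
      moreover have "int_a a (cl_a a G) e \<subseteq> int_a a (cl_a a (soft_Union S)) e"
        by (intro cl_mono int_mono sub_U G(1))
      ultimately show "x \<in> int_a a (cl_a a (soft_Union S)) e" by blast
    qed
  }
  {
    assume h: "\<forall>G\<in>S. soft_a_beta_open a G"
    show "soft_a_beta_open a (soft_Union S)"
      unfolding soft_a_beta_open_def soft_subset_def
    proof (intro allI subsetI)
      fix e x assume "x \<in> soft_Union S e"
      then obtain G where G: "G \<in> S" "x \<in> G e" unfolding soft_Union_def by blast
      then have "x \<in> cl_a a (int_a a (cl_a a G)) e" using h unfolding soft_a_beta_open_def soft_subset_def by blast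
      moreover have "cl_a a (int_a a (cl_a a G)) e \<subseteq> cl_a a (int_a a (cl_a a (soft_Union S))) e"
        by (intro cl_mono int_mono sub_U G(1))
      ultimately show "x \<in> cl_a a (int_a a (cl_a a (soft_Union S))) e" by blast
    qed
  }
qed

end
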